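(* In the age-structured map $h$ of the context, let $\bm{\hat{y}}$ be an equilibrium whose adult part $\bm{\hat{x}}$ has $\hat{x}_i=0$ for $i$ in a nonempty set $Z\subseteq\mathcal{M}$ and $\hat{x}_i>0$ for $i\in\mathcal{M}\setminus Z$. Assume that for every $i\in\mathcal{M}$, $\hat{x}_i=0$ implies $\hat{x}_iG_i(\bm{\hat{x}})=0$. Let $\bm{\hat{J}}$ be the Jacobian of $h$ at $\bm{\hat{y}}$ and let $\bm{J}^\bullet$ be its principal submatrix indexed by all age classes of the species in $\mathcal{M}\setminus Z$, and assume $\rho(\bm{J}^\bullet)<1$ (vacuous if $Z=\mathcal{M}$). If $$|G_i(\bm{\hat{x}})|\prod_{a=0}^{\delta_i-1}\sigma_{a\mid i} < z_i\quad\text{for all } i\in Z,$$ then $\rho(\bm{\hat{J}})<1$, i.e. $\bm{\hat{y}}$ is locally asymptotically stable.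
   Context: Let $m\ge1$, $\mathcal{M}=\{1,\dots,m\}$. For each species $i$: delay $\delta_i\in\{0,1,2,\dots\}$; survival probabilities $\sigma_{a\mid i}\in(0,1]$ for $a=0,\dots,\delta_i-1$, adult survival $\sigma_{\delta_i\mid i}\in(0,1)$, adult mortality $z_i=1-\sigma_{\delta_i\mid i}$; empty products equal $1$. $G_i:\mathbb{R}^m\to\mathbb{R}$ differentiable. State $\bm{y}=(y_{a\mid i})$, $i\in\mathcal{M}$, $0\le a\le\delta_i$; adults $\bm{x}=(y_{\delta_1\mid1},\dots,y_{\delta_m\mid m})^\top$. Map $h$: if $\delta_i>0$, $h_{0\mid i}(\bm{y})=G_i(\bm{x})y_{\delta_i\mid i}$, $h_{a\mid i}(\bm{y})=\sigma_{a-1\mid i}y_{a-1\mid i}$ ($1\le a\le\delta_i-1$), $h_{\delta_i\mid i}(\bm{y})=\sigma_{\delta_i-1\mid i}y_{\delta_i-1\mid i}+\sigma_{\delta_i\mid i}y_{\delta_i\mid i}$; if $\delta_i=0$, $h_{0\mid i}(\bm{y})=\sigma_{0\mid i}y_{0\mid i}+G_i(\bm{x})y_{0\mid i}$. $\rho(\cdot)$ is spectral radius; an equilibrium is locally asymptotically stable if the Jacobian of $h$ there has spectral radius $<1$. *)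

theory Defs
  imports "HOL-Analysis.Analysis" "Jordan_Normal_Form.Spectral_Radius"
begin

(* Species are the elements of a finite type 'm (so M = UNIV :: 'm set, m = CARD('m) >= 1).
   A state is a function y :: 'm \<times> nat \<Rightarrow> real; the meaningful coordinates are
   the pairs (i,a) with a \<le> \<delta> i. *)

definition Idx :: "('m \<Rightarrow> nat) \<Rightarrow> ('m \<times> nat) set" where
  "Idx \<delta> = {(i, a). a \<le> \<delta> i}"

definition adults :: "('m::finite \<Rightarrow> nat) \<Rightarrow> ('m \<times> nat \<Rightarrow> real) \<Rightarrow> real ^ 'm" where
  "adults \<delta> y = (\<chi> i. y (i, \<delta> i))"

definition hmap :: "('m::finite \<Rightarrow> nat) \<Rightarrow> ('m \<Rightarrow> nat \<Rightarrow> real) \<Rightarrow> ('m \<Rightarrow> real ^ 'm \<Rightarrow> real)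
    \<Rightarrow> ('m \<times> nat \<Rightarrow> real) \<Rightarrow> ('m \<times> nat \<Rightarrow> real)" where
  "hmap \<delta> \<sigma> G y = (\<lambda>(i, a).
     if \<delta> i = 0 then
       (if a = 0 then \<sigma> i 0 * y (i, 0) + G i (adults \<delta> y) * y (i, 0) else 0)
     else if a = 0 then G i (adults \<delta> y) * y (i, \<delta> i)
     else if a < \<delta> i then \<sigma> i (a - 1) * y (i, a - 1)
     else if a = \<delta> i then \<sigma> i (a - 1) * y (i, a - 1) + \<sigma> i (\<delta> i) * y (i, \<delta> i)
     else 0)"

definition jac :: "('m::finite \<Rightarrow> nat) \<Rightarrow> ('m \<Rightarrow> nat \<Rightarrow> real) \<Rightarrow> ('m \<Rightarrow> real ^ 'm \<Rightarrow> real)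
    \<Rightarrow> ('m \<times> nat \<Rightarrow> real) \<Rightarrow> ('m \<times> nat) \<Rightarrow> ('m \<times> nat) \<Rightarrow> real" where
  "jac \<delta> \<sigma> G y p q = deriv (\<lambda>t. hmap \<delta> \<sigma> G (y(q := y q + t)) p) 0"

(* a matrix indexed by a finite set I, turned into a library matrix via an (arbitrary)
   enumeration of I; the spectral radius does not depend on the enumeration *)
definition idx_enum :: "'i set \<Rightarrow> nat \<Rightarrow> 'i" where
  "idx_enum I = (SOME f. bij_betw f {..<card I} I)"

definition mat_on :: "'i set \<Rightarrow> ('i \<Rightarrow> 'i \<Rightarrow> real) \<Rightarrow> real mat" where
  "mat_on I A = mat (card I) (card I) (\<lambda>(r, c). A (idx_enum I r) (idx_enum I c))"

definition spec_rad_on :: "'i set \<Rightarrow> ('i \<Rightarrow> 'i \<Rightarrow> real) \<Rightarrow> real" where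
  "spec_rad_on I A = spectral_radius (map_mat complex_of_real (mat_on I A))"

end

theory Submission
  imports Defs
begin


lemma idx_enum_bij: "finite I \<Longrightarrow> bij_betw (idx_enum I) {..<card I} I"
  unfolding idx_enum_def
  by (metis (mono_tags) ex_bij_betw_nat_finite atLeast0LessThan someI_ex)

definition eig_on :: "'i set \<Rightarrow> ('i \<Rightarrow> 'i \<Rightarrow> real) \<Rightarrow> complex \<Rightarrow> bool" where
  "eig_on I A l = (\<exists>v. (\<exists>p\<in>I. v p \<noteq> 0) \<and> (\<forall>p\<in>I. (\<Sum>q\<in>I. complex_of_real (A p q) * v q) = l * v p))"

lemma eigenvalue_mat_on:
  assumes fin: "finite I"
  shows "eigenvalue (map_mat complex_of_real (mat_on I A)) l \<longleftrightarrow> eig_on I A l"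
proof -
  define n where "n = card I"
  define f where "f = idx_enum I"
  define M where "M = map_mat complex_of_real (mat_on I A)"
  have bij: "bij_betw f {..<n} I" using idx_enum_bij[OF fin] by (simp add: f_def n_def)
  have M: "M \<in> carrier_mat n n" by (simp add: M_def mat_on_def n_def)
  have Mij: "M $$ (r, c) = complex_of_real (A (f r) (f c))" if "r < n" "c < n" for r c
    using that by (simp add: M_def mat_on_def n_def f_def)
  have inv1: "the_inv_into {..<n} f (f c) = c" if "c < n" for c
    using that bij by (simp add: the_inv_into_f_f bij_betw_def)
  have inv2: "the_inv_into {..<n} f q < n" "f (the_inv_into {..<n} f q) = q" if "q \<in> I" for q
    using that bij unfolding bij_betw_def
    by (auto simp: the_inv_into_f_f f_the_inv_into_f)
  have key: "(M *\<^sub>v w) $ r = (\<Sum>q\<in>I. complex_of_real (A (f r) q) * w $ (the_inv_into {..<n} f q))"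
    if "r < n" "dim_vec w = n" for r w
  proof -
    have "(M *\<^sub>v w) $ r = (\<Sum>c\<in>{..<n}. M $$ (r,c) * w $ c)"
      using that M by (simp add: scalar_prod_def atLeast0LessThan)
    also have "\<dots> = (\<Sum>c\<in>{..<n}. complex_of_real (A (f r) (f c)) * w $ (the_inv_into {..<n} f (f c)))"
      by (rule sum.cong, simp) (use that in \<open>simp add: Mij inv1\<close>)
    also have "\<dots> = (\<Sum>q\<in>I. complex_of_real (A (f r) q) * w $ (the_inv_into {..<n} f q))"
      by (rule sum.reindex_bij_betw[OF bij])
    finally show ?thesis .
  qed
  show ?thesis
  proof
    assume "eigenvalue (map_mat complex_of_real (mat_on I A)) l"
    then obtain w where ev: "eigenvector M w l" unfolding eigenvalue_def M_def by auto
    hence w: "w \<in> carrier_vec n" "w \<noteq> 0\<^sub>v n" "M *\<^sub>v w = l \<cdot>\<^sub>v w"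
      unfolding eigenvector_def using M by auto
    define v where "v p = w $ (the_inv_into {..<n} f p)" for p
    show "eig_on I A l" unfolding eig_on_def
    proof (intro exI conjI ballI)
      from w(1,2) obtain r where r: "r < n" "w $ r \<noteq> 0"
        by (metis eq_vecI carrier_vecD index_zero_vec(1) index_zero_vec(2))
      show "\<exists>p\<in>I. v p \<noteq> 0"
        using r bij by (intro bexI[of _ "f r"]) (auto simp: v_def inv1 bij_betw_def)
      fix p assume p: "p \<in> I"
      define r where "r = the_inv_into {..<n} f p"
      have r: "r < n" "f r = p" using inv2[OF p] unfolding r_def by auto
      have "(M *\<^sub>v w) $ r = l * v p" using w r by (simp add: v_def r_def)
      moreover have "(M *\<^sub>v w) $ r = (\<Sum>q\<in>I. complex_of_real (A p q) * v q)"
        using key[of r w] r w by (simp add: v_def)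
      ultimately show "(\<Sum>q\<in>I. complex_of_real (A p q) * v q) = l * v p" by simp
    qed
  next
    assume "eig_on I A l"
    then obtain v where v0: "\<exists>p\<in>I. v p \<noteq> 0"
      and ve: "\<forall>p\<in>I. (\<Sum>q\<in>I. complex_of_real (A p q) * v q) = l * v p"
      unfolding eig_on_def by auto
    define w where "w = vec n (\<lambda>r. v (f r))"
    have wq: "w $ (the_inv_into {..<n} f q) = v q" if "q \<in> I" for q
      using inv2[OF that] unfolding w_def by simp
    have fI: "f r \<in> I" if "r < n" for r using that bij unfolding bij_betw_def by auto
    have "eigenvector M w l" unfolding eigenvector_def
    proof (intro conjI)
      show "w \<in> carrier_vec (dim_row M)" using M by (simp add: w_def)
      show "w \<noteq> 0\<^sub>v (dim_row M)"
      proof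
        assume "w = 0\<^sub>v (dim_row M)"
        then have "v q = 0" if "q \<in> I" for q
          using wq[OF that] inv2[OF that] M by auto
        with v0 show False by auto
      qed
      show "M *\<^sub>v w = l \<cdot>\<^sub>v w"
      proof (rule eq_vecI)
        fix r assume "r < dim_vec (l \<cdot>\<^sub>v w)"
        hence r: "r < n" by (simp add: w_def)
        have "(M *\<^sub>v w) $ r = (\<Sum>q\<in>I. complex_of_real (A (f r) q) * w $ (the_inv_into {..<n} f q))"
          using key[of r w] r by (simp add: w_def)
        also have "\<dots> = (\<Sum>q\<in>I. complex_of_real (A (f r) q) * v q)"
          by (rule sum.cong) (simp_all add: wq)
        also have "\<dots> = l * v (f r)" using ve fI[OF r] by auto
        finally show "(M *\<^sub>v w) $ r = (l \<cdot>\<^sub>v w) $ r" using r by (simp add: w_def)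
      qed (use M in \<open>simp add: w_def\<close>)
    qed
    thus "eigenvalue (map_mat complex_of_real (mat_on I A)) l"
      unfolding eigenvalue_def M_def by auto
  qed
qed

lemma spec_rad_on_lt1:
  assumes fin: "finite I" and ne: "I \<noteq> {}"
  shows "spec_rad_on I A < 1 \<longleftrightarrow> (\<forall>l. eig_on I A l \<longrightarrow> cmod l < 1)"
proof -
  define M where "M = map_mat complex_of_real (mat_on I A)"
  have M: "M \<in> carrier_mat (card I) (card I)" by (simp add: M_def mat_on_def)
  have n: "card I > 0" using fin ne by (simp add: card_gt_0_iff)
  note mm = spectral_radius_mem_max[OF M n]
  have sp: "l \<in> spectrum M \<longleftrightarrow> eig_on I A l" for l
    using eigenvalue_mat_on[OF fin] unfolding spectrum_def M_def by simp
  show ?thesis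
  proof
    assume "spec_rad_on I A < 1"
    then show "\<forall>l. eig_on I A l \<longrightarrow> cmod l < 1"
      using mm(2) sp unfolding spec_rad_on_def M_def
      by (metis image_eqI le_less_trans)
  next
    assume H: "\<forall>l. eig_on I A l \<longrightarrow> cmod l < 1"
    from mm(1) obtain l where "l \<in> spectrum M" "spectral_radius M = cmod l" by auto
    then show "spec_rad_on I A < 1" using H sp unfolding spec_rad_on_def M_def by auto
  qed
qed



lemma alg0:
  fixes w :: complex and s g :: real
  assumes s: "0 < s" and cond: "\<bar>g\<bar> < 1 - s" and l1: "cmod l \<ge> 1"
    and eq: "complex_of_real (s + g) * w = l * w" and nz: "w \<noteq> 0"
  shows False
proof -
  have "l = complex_of_real (s + g)" using eq nz by simp
  hence "cmod l = \<bar>s + g\<bar>" using norm_of_real by metis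
  also have "\<dots> < 1" using s cond by (auto simp: abs_if split: if_splits)
  finally show False using l1 by simp
qed

lemma algpos:
  fixes w :: "nat \<Rightarrow> complex" and s :: "nat \<Rightarrow> real" and g :: real
  assumes s: "\<And>a. a < Suc m \<Longrightarrow> 0 < s a" and sn: "0 \<le> s (Suc m)"
    and cond: "\<bar>g\<bar> * (\<Prod>a<Suc m. s a) < 1 - s (Suc m)" and l1: "cmod l \<ge> 1"
    and e0: "complex_of_real g * w (Suc m) = l * w 0"
    and ea: "\<And>a. a < m \<Longrightarrow> complex_of_real (s a) * w a = l * w (Suc a)"
    and en: "complex_of_real (s m) * w m + complex_of_real (s (Suc m)) * w (Suc m) = l * w (Suc m)"
    and nz: "a \<le> Suc m" "w a \<noteq> 0"
  shows False
proof -
  have l0: "l \<noteq> 0" using l1 by auto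
  have P: "l ^ a * w a = complex_of_real (\<Prod>b<a. s b) * w 0" if "a \<le> m" for a
    using that
  proof (induction a)
    case 0 then show ?case by simp
  next
    case (Suc a)
    have "l ^ Suc a * w (Suc a) = l ^ a * (l * w (Suc a))" by (simp add: algebra_simps)
    also have "\<dots> = complex_of_real (s a) * (l ^ a * w a)" using ea[of a] Suc.prems
      by (simp add: algebra_simps)
    also have "\<dots> = complex_of_real (\<Prod>b<Suc a. s b) * w 0" using Suc by (simp add: algebra_simps)
    finally show ?case .
  qed
  show False
  proof (cases "w (Suc m) = 0")
    case True
    then have "w 0 = 0" using e0 l0 by simp
    then have "w a = 0" if "a \<le> m" for a using P[OF that] that l0 by simp
    then show False using nz True by (cases "a = Suc m") auto
  next
    case False
    have en': "(l - complex_of_real (s (Suc m))) * w (Suc m) = complex_of_real (s m) * w m"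
      using en by (simp add: algebra_simps)
    have "l ^ m * ((l - complex_of_real (s (Suc m))) * w (Suc m)) = l ^ m * (complex_of_real (s m) * w m)"
      by (simp only: en')
    also have "\<dots> = complex_of_real (s m) * (complex_of_real (\<Prod>b<m. s b) * w 0)"
      using P[of m] by (simp add: algebra_simps)
    also have "\<dots> = complex_of_real (\<Prod>b<Suc m. s b) * w 0" by (simp add: algebra_simps)
    finally have h: "l ^ m * ((l - complex_of_real (s (Suc m))) * w (Suc m)) = complex_of_real (\<Prod>b<Suc m. s b) * w 0" .
    have "(l ^ Suc m * (l - complex_of_real (s (Suc m)))) * w (Suc m) = l * (l ^ m * ((l - complex_of_real (s (Suc m))) * w (Suc m)))"
      by (simp add: algebra_simps)
    also have "\<dots> = complex_of_real (\<Prod>b<Suc m. s b) * (l * w 0)" using h by (simp add: algebra_simps)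
    also have "\<dots> = complex_of_real (g * (\<Prod>b<Suc m. s b)) * w (Suc m)" using e0 by (simp add: algebra_simps)
    finally have "l ^ Suc m * (l - complex_of_real (s (Suc m))) = complex_of_real (g * (\<Prod>b<Suc m. s b))"
      using False by simp
    hence "cmod (l ^ Suc m * (l - complex_of_real (s (Suc m)))) = \<bar>g * (\<Prod>b<Suc m. s b)\<bar>"
      by (simp only: norm_of_real)
    also have "\<dots> = \<bar>g\<bar> * (\<Prod>b<Suc m. s b)"
    proof -
      have "(\<Prod>b<Suc m. s b) \<ge> 0" using s by (intro prod_nonneg) (auto intro: less_imp_le)
      then show ?thesis by (simp only: abs_mult abs_of_nonneg)
    qed
    finally have "cmod (l ^ Suc m * (l - complex_of_real (s (Suc m)))) = \<bar>g\<bar> * (\<Prod>b<Suc m. s b)" .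
    moreover have "cmod (l ^ Suc m * (l - complex_of_real (s (Suc m)))) \<ge> 1 - s (Suc m)"
    proof -
      have a: "cmod l ^ Suc m \<ge> 1" by (rule one_le_power[OF l1])
      have b: "cmod (l - complex_of_real (s (Suc m))) \<ge> cmod l - s (Suc m)"
        using norm_triangle_ineq2[of l "complex_of_real (s (Suc m))"] sn by simp
      have "cmod (l - complex_of_real (s (Suc m))) \<ge> 1 - s (Suc m)" using b l1 by linarith
      moreover have "1 - s (Suc m) \<ge> 0" using cond s
        by (smt (verit) mult_nonneg_nonneg prod_nonneg lessThan_iff)
      ultimately have "cmod l ^ Suc m * cmod (l - complex_of_real (s (Suc m))) \<ge> 1 * (1 - s (Suc m))"
        using a by (intro mult_mono) auto
      then show ?thesis by (simp add: norm_mult norm_power)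
    qed
    ultimately show False using cond by linarith
  qed
qed



lemma adults_upd: "adults \<delta> (y(q := y q + t)) = adults \<delta> y + t *\<^sub>R (\<chi> j. if q = (j, \<delta> j) then 1 else 0)"
  unfolding adults_def Finite_Cartesian_Product.vec_eq_iff by auto

lemma G_deriv:
  fixes G :: "real ^ 'm::finite \<Rightarrow> real"
  assumes Gd: "\<And>x. G differentiable (at x)"
  shows "\<exists>D. ((\<lambda>t. G (adults \<delta> (y(q := y q + t)))) has_real_derivative D) (at 0)"
proof -
  define d :: "real ^ 'm" where "d = (\<chi> j. if q = (j, \<delta> j) then 1 else 0)"
  have h: "((\<lambda>t. adults \<delta> y + t *\<^sub>R d) has_derivative (\<lambda>t. t *\<^sub>R d)) (at 0)"
    by (auto intro!: derivative_eq_intros)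
  hence "(\<lambda>t. adults \<delta> y + t *\<^sub>R d) differentiable (at 0)" by (rule differentiableI)
  hence "(G \<circ> (\<lambda>t. adults \<delta> y + t *\<^sub>R d)) differentiable (at 0)"
    by (rule differentiable_chain_at) (simp add: Gd)
  hence "(\<lambda>t. G (adults \<delta> (y(q := y q + t)))) differentiable (at 0)"
    by (simp add: adults_upd o_def d_def)
  thus ?thesis using DERIV_deriv_iff_real_differentiable by blast
qed

lemma jac_Z:
  fixes \<delta> :: "'m::finite \<Rightarrow> nat"
  assumes Gd: "\<And>j x. G j differentiable (at x)" and y0: "y (i, \<delta> i) = 0" and a: "a \<le> \<delta> i"
  shows "jac \<delta> \<sigma> G y (i,a) q =
    (if \<delta> i = 0 then (if q = (i,0) then \<sigma> i 0 + G i (adults \<delta> y) else 0)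
     else if a = 0 then (if q = (i, \<delta> i) then G i (adults \<delta> y) else 0)
     else if a < \<delta> i then (if q = (i, a-1) then \<sigma> i (a-1) else 0)
     else (if q = (i, a-1) then \<sigma> i (a-1) else 0) + (if q = (i, \<delta> i) then \<sigma> i (\<delta> i) else 0))"
proof -
  define g where "g t = G i (adults \<delta> (y(q := y q + t)))" for t
  obtain D where gD: "(g has_real_derivative D) (at 0)"
    using G_deriv[OF Gd, of i \<delta> y q] unfolding g_def by blast
  have g0: "g 0 = G i (adults \<delta> y)" by (simp add: g_def)
  define e where "e r t = (if r = q then t else 0)" for r and t :: real
  have E: "(e r has_real_derivative (if r = q then 1 else 0)) (at 0)" for r
    unfolding e_def[abs_def] by (cases "r = q") (auto intro!: derivative_eq_intros)
  have e0: "e r 0 = 0" for r by (simp add: e_def)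
  have Ey: "((\<lambda>t. c + e r t) has_real_derivative (if r = q then 1 else 0)) (at 0)" for c r
    unfolding e_def by (cases "r = q") (auto intro!: derivative_eq_intros)
  have E2: "((\<lambda>t. s * (c + e r t)) has_real_derivative s * (if r = q then 1 else 0)) (at 0)" for s c r
    by (rule DERIV_cmult[OF Ey])
  have E3: "((\<lambda>t. g t * (c + e r t)) has_real_derivative D * c + (if r = q then 1 else 0) * g 0) (at 0)" for c r
    using DERIV_mult[OF gD Ey[of c r]] by (simp add: e0)
  have H: "(\<lambda>t. hmap \<delta> \<sigma> G (y(q := y q + t)) (i,a)) = (\<lambda>t.
     (if \<delta> i = 0 then \<sigma> i 0 * (y (i,0) + e (i,0) t) + g t * (y (i,0) + e (i,0) t)
      else if a = 0 then g t * (y (i, \<delta> i) + e (i, \<delta> i) t)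
      else if a < \<delta> i then \<sigma> i (a-1) * (y (i,a-1) + e (i,a-1) t)
      else \<sigma> i (a-1) * (y (i,a-1) + e (i,a-1) t) + \<sigma> i (\<delta> i) * (y (i, \<delta> i) + e (i, \<delta> i) t)))"
    using a by (auto simp: hmap_def g_def e_def fun_eq_iff)
  show ?thesis
  proof (cases "\<delta> i = 0")
    case True
    then have a0: "a = 0" using a by simp
    have "jac \<delta> \<sigma> G y (i,a) q = deriv (\<lambda>t. \<sigma> i 0 * (y (i,0) + e (i,0) t) + g t * (y (i,0) + e (i,0) t)) 0"
      unfolding jac_def H using True by simp
    also have "\<dots> = \<sigma> i 0 * (if (i,0) = q then 1 else 0) + (D * y (i,0) + (if (i,0) = q then 1 else 0) * g 0)"
      by (rule DERIV_imp_deriv) (rule DERIV_add[OF E2 E3])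
    finally show ?thesis using True y0 a0 by (auto simp: e0 g0)
  next
    case F: False
    show ?thesis
    proof (cases "a = 0")
      case True
      have "jac \<delta> \<sigma> G y (i,a) q = deriv (\<lambda>t. g t * (y (i, \<delta> i) + e (i, \<delta> i) t)) 0"
        unfolding jac_def H using True F by simp
      also have "\<dots> = D * y (i, \<delta> i) + (if (i, \<delta> i) = q then 1 else 0) * g 0"
        by (rule DERIV_imp_deriv) (rule E3)
      finally show ?thesis using True F y0 by (auto simp: e0 g0)
    next
      case a0: False
      show ?thesis
      proof (cases "a < \<delta> i")
        case True
        have "jac \<delta> \<sigma> G y (i,a) q = deriv (\<lambda>t. \<sigma> i (a-1) * (y (i,a-1) + e (i,a-1) t)) 0"
          unfolding jac_def H using True F a0 by simp
        also have "\<dots> = \<sigma> i (a-1) * (if (i,a-1) = q then 1 else 0)"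
          by (rule DERIV_imp_deriv) (rule E2)
        finally show ?thesis using True F a0 by auto
      next
        case False
        have "jac \<delta> \<sigma> G y (i,a) q = deriv (\<lambda>t. \<sigma> i (a-1) * (y (i,a-1) + e (i,a-1) t) + \<sigma> i (\<delta> i) * (y (i, \<delta> i) + e (i, \<delta> i) t)) 0"
          unfolding jac_def H using False F a0 by simp
        also have "\<dots> = \<sigma> i (a-1) * (if (i,a-1) = q then 1 else 0) + \<sigma> i (\<delta> i) * (if (i, \<delta> i) = q then 1 else 0)"
          by (rule DERIV_imp_deriv) (rule DERIV_add[OF E2 E2])
        finally show ?thesis using False F a0 by auto
      qed
    qed
  qed
qed



theorem theorem4:
  fixes \<delta> :: "'m::finite \<Rightarrow> nat"
    and \<sigma> :: "'m \<Rightarrow> nat \<Rightarrow> real"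
    and G :: "'m \<Rightarrow> real ^ 'm \<Rightarrow> real"
    and yhat :: "'m \<times> nat \<Rightarrow> real"
    and Z :: "'m set"
  assumes sigma_juv: "\<And>i a. a < \<delta> i \<Longrightarrow> 0 < \<sigma> i a \<and> \<sigma> i a \<le> 1"
    and sigma_ad: "\<And>i. 0 < \<sigma> i (\<delta> i) \<and> \<sigma> i (\<delta> i) < 1"
    and G_diff: "\<And>i x. G i differentiable (at x)"
    and equil: "\<forall>p \<in> Idx \<delta>. hmap \<delta> \<sigma> G yhat p = yhat p"
    and Z_ne: "Z \<noteq> {}"
    and x_Z: "\<forall>i \<in> Z. adults \<delta> yhat $ i = 0"
    and x_pos: "\<forall>i. i \<notin> Z \<longrightarrow> adults \<delta> yhat $ i > 0"
    and xG: "\<forall>i. adults \<delta> yhat $ i = 0 \<longrightarrow> adults \<delta> yhat $ i * G i (adults \<delta> yhat) = 0"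
    and rho_bullet: "Z \<noteq> UNIV \<Longrightarrow>
       spec_rad_on {(i, a) \<in> Idx \<delta>. i \<notin> Z} (jac \<delta> \<sigma> G yhat) < 1"
    and cond: "\<forall>i \<in> Z. \<bar>G i (adults \<delta> yhat)\<bar> * (\<Prod>a<\<delta> i. \<sigma> i a) < 1 - \<sigma> i (\<delta> i)"
  shows "spec_rad_on (Idx \<delta>) (jac \<delta> \<sigma> G yhat) < 1"
proof -
  have IdxS: "Idx \<delta> = (SIGMA i:UNIV. {..\<delta> i})" by (auto simp: Idx_def)
  have fin: "finite (Idx \<delta>)" unfolding IdxS by (intro finite_SigmaI) simp_all
  have i0: "(undefined, 0) \<in> Idx \<delta>" by (simp add: Idx_def)
  have ne: "Idx \<delta> \<noteq> {}" using i0 by blast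
  have y0: "yhat (i, \<delta> i) = 0" if "i \<in> Z" for i using x_Z that by (simp add: adults_def)
  have mem: "(i,a) \<in> Idx \<delta>" if "a \<le> \<delta> i" for i a using that by (simp add: Idx_def)
  have sumd: "(\<Sum>q\<in>Idx \<delta>. complex_of_real (if q = r then c else 0) * v q) = complex_of_real c * v r"
    if "r \<in> Idx \<delta>" for r c and v :: "'m \<times> nat \<Rightarrow> complex"
  proof -
    have "(\<Sum>q\<in>Idx \<delta>. complex_of_real (if q = r then c else 0) * v q)
        = (\<Sum>q\<in>Idx \<delta>. if q = r then complex_of_real c * v r else 0)"
      by (rule sum.cong) auto
    also have "\<dots> = complex_of_real c * v r" using fin that by simp
    finally show ?thesis .
  qed
  have sumd2: "(\<Sum>q\<in>Idx \<delta>. complex_of_real ((if q = r then c else 0) + (if q = r' then c' else 0)) * v q)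
      = complex_of_real c * v r + complex_of_real c' * v r'"
    if "r \<in> Idx \<delta>" "r' \<in> Idx \<delta>" for r r' c c' and v :: "'m \<times> nat \<Rightarrow> complex"
  proof -
    have "(\<Sum>q\<in>Idx \<delta>. complex_of_real ((if q = r then c else 0) + (if q = r' then c' else 0)) * v q)
       = (\<Sum>q\<in>Idx \<delta>. complex_of_real (if q = r then c else 0) * v q)
         + (\<Sum>q\<in>Idx \<delta>. complex_of_real (if q = r' then c' else 0) * v q)"
      unfolding sum.distrib[symmetric] by (rule sum.cong) (simp_all add: distrib_right)
    also have "\<dots> = complex_of_real c * v r + complex_of_real c' * v r'"
      using sumd that by simp
    finally show ?thesis .
  qed
  show ?thesis unfolding spec_rad_on_lt1[OF fin ne]
  proof (intro allI impI)
    fix l assume "eig_on (Idx \<delta>) (jac \<delta> \<sigma> G yhat) l"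
    then obtain v where v0: "\<exists>p\<in>Idx \<delta>. v p \<noteq> 0"
      and ve: "\<forall>p\<in>Idx \<delta>. (\<Sum>q\<in>Idx \<delta>. complex_of_real (jac \<delta> \<sigma> G yhat p q) * v q) = l * v p"
      unfolding eig_on_def by blast
    show "cmod l < 1"
    proof (rule ccontr)
      assume "\<not> cmod l < 1" hence l1: "cmod l \<ge> 1" by simp
      show False
      proof (cases "\<exists>i\<in>Z. \<exists>a\<le>\<delta> i. v (i,a) \<noteq> 0")
        case True
        then obtain i a0 where i: "i \<in> Z" and a0: "a0 \<le> \<delta> i" "v (i,a0) \<noteq> 0" by blast
        have row: "(\<Sum>q\<in>Idx \<delta>. complex_of_real (jac \<delta> \<sigma> G yhat (i,a) q) * v q) = l * v (i,a)"
          if "a \<le> \<delta> i" for a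
          using ve mem[OF that] by blast
        note jz = jac_Z[where G=G and \<sigma>=\<sigma> and \<delta>=\<delta> and y=yhat and i=i, OF G_diff y0[OF i]]
        show False
        proof (cases "\<delta> i")
          case 0
          have j: "jac \<delta> \<sigma> G yhat (i,0) q = (if q = (i,0) then \<sigma> i 0 + G i (adults \<delta> yhat) else 0)" for q
            using jz[of 0 q] 0 by simp
          have "complex_of_real (\<sigma> i 0 + G i (adults \<delta> yhat)) * v (i,0) = l * v (i,0)"
            using row[of 0] sumd[OF mem[of 0 i]] 0 unfolding j by simp
          moreover have "a0 = 0" using a0 0 by simp
          moreover have "\<bar>G i (adults \<delta> yhat)\<bar> < 1 - \<sigma> i 0" using bspec[OF cond i] 0 by simp
          moreover have "0 < \<sigma> i 0" using sigma_ad[of i] 0 by simp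
          ultimately show False
            using alg0[of "\<sigma> i 0" "G i (adults \<delta> yhat)" l "v (i,0)"] l1 a0 by blast
        next
          case (Suc m)
          have j0: "jac \<delta> \<sigma> G yhat (i,0) q = (if q = (i, Suc m) then G i (adults \<delta> yhat) else 0)" for q
            using jz[of 0 q] Suc by simp
          have e0: "complex_of_real (G i (adults \<delta> yhat)) * v (i, Suc m) = l * v (i,0)"
            using row[of 0] sumd[OF mem[of "Suc m" i]] Suc unfolding j0 by simp
          have ea: "complex_of_real (\<sigma> i a) * v (i,a) = l * v (i, Suc a)" if "a < m" for a
          proof -
            have ja: "jac \<delta> \<sigma> G yhat (i,Suc a) q = (if q = (i, a) then \<sigma> i a else 0)" for q
              using jz[of "Suc a" q] Suc that by simp
            show ?thesis
              using row[of "Suc a"] sumd[OF mem[of a i]] Suc that unfolding ja by simp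
          qed
          have jn: "jac \<delta> \<sigma> G yhat (i,Suc m) q = (if q = (i, m) then \<sigma> i m else 0) + (if q = (i, Suc m) then \<sigma> i (Suc m) else 0)" for q
            using jz[of "Suc m" q] Suc by simp
          have en: "complex_of_real (\<sigma> i m) * v (i,m) + complex_of_real (\<sigma> i (Suc m)) * v (i, Suc m)
              = l * v (i, Suc m)"
            using row[of "Suc m"] sumd2[OF mem[of m i] mem[of "Suc m" i]] Suc unfolding jn by simp
          have s: "0 < \<sigma> i a" if "a < Suc m" for a using sigma_juv[of a i] that Suc by simp
          have sn: "0 \<le> \<sigma> i (Suc m)" using sigma_ad[of i] Suc by simp
          have c: "\<bar>G i (adults \<delta> yhat)\<bar> * (\<Prod>a<Suc m. \<sigma> i a) < 1 - \<sigma> i (Suc m)" using bspec[OF cond i] Suc by simp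
          show False
            using algpos[of m "\<lambda>a. \<sigma> i a" "G i (adults \<delta> yhat)" l "\<lambda>a. v (i,a)" a0, OF s sn c l1 e0 ea en]
              a0 Suc by simp
        qed
      next
        case False
        hence vz: "v (i,a) = 0" if "i \<in> Z" "a \<le> \<delta> i" for i a using that by blast
        define B where "B = {(i, a) \<in> Idx \<delta>. i \<notin> Z}"
        obtain p where p: "p \<in> Idx \<delta>" "v p \<noteq> 0" using v0 by blast
        have pB: "p \<in> B" using p vz by (cases p) (auto simp: B_def Idx_def)
        have ZU: "Z \<noteq> UNIV" using pB by (auto simp: B_def)
        have BI: "B \<subseteq> Idx \<delta>" by (auto simp: B_def)
        have finB: "finite B" using finite_subset[OF BI fin] .
        have neB: "B \<noteq> {}" using pB by auto
        have "eig_on B (jac \<delta> \<sigma> G yhat) l" unfolding eig_on_def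
        proof (intro exI conjI ballI)
          show "\<exists>p\<in>B. v p \<noteq> 0" using pB p by blast
          fix r assume r: "r \<in> B"
          have "(\<Sum>q\<in>B. complex_of_real (jac \<delta> \<sigma> G yhat r q) * v q)
              = (\<Sum>q\<in>Idx \<delta>. complex_of_real (jac \<delta> \<sigma> G yhat r q) * v q)"
          proof (rule sum.mono_neutral_left[OF fin BI], rule ballI)
            fix q assume "q \<in> Idx \<delta> - B"
            then obtain i a where "q = (i,a)" "i \<in> Z" "a \<le> \<delta> i" by (cases q) (auto simp: B_def Idx_def)
            then show "complex_of_real (jac \<delta> \<sigma> G yhat r q) * v q = 0" using vz by simp
          qed
          also have "\<dots> = l * v r" using ve r BI by auto
          finally show "(\<Sum>q\<in>B. complex_of_real (jac \<delta> \<sigma> G yhat r q) * v q) = l * v r" .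
        qed
        hence "cmod l < 1" using rho_bullet[OF ZU] spec_rad_on_lt1[OF finB neB] unfolding B_def by blast
        thus False using l1 by simp
      qed
    qed
  qed
qed

end
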